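(* Let $n\ge2$, let $a_1,\dots,a_n$ be real numbers, $C(t)=\sum_{j=1}^n a_j\cos jt$, $S(t)=\sum_{j=1}^n a_j\sin jt$. Let $1\le m<n$ and let $t_1,\dots,t_m\in(0,\pi)$ be pairwise distinct with $$S(t_1)=\dots=S(t_m)=0,\qquad C(t_1)=\dots=C(t_m).$$ Define numbers $a^{(j)}_k$ recursively: $a^{(0)}_k=a_k$ ($k=1,\dots,n$), and for $j=1,\dots,m$ set $a^{(j)}_{n-j+1}=a^{(j)}_{n-j+2}=0$ and, for $k=n-j+1,n-j,\dots,2$ (in this order), $$a^{(j)}_{k-1}=2a^{(j-1)}_k+2\cos t_j\,a^{(j)}_k-a^{(j)}_{k+1}.$$ Then $$C(t_1)=\dots=C(t_m)=-\frac{a^{(m)}_m}{2^m}.$$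
   Context: The recursion determines $a^{(m)}_m$ uniquely from $a_2,\dots,a_n$ and $t_1,\dots,t_m$. *)

theory Defs
  imports Complex_Main
begin

text \<open>One sweep of the recursion for a fixed level j \<ge> 1.
  prev = a^(j-1), c = cos t_j, T = n - j + 2 (top index).
  down prev c T d = a^(j)_(T - d), so a^(j)_T = a^(j)_(T-1) = 0 and
  a^(j)_(k-1) = 2 a^(j-1)_k + 2 c a^(j)_k - a^(j)_(k+1) with k = T - (d+1).\<close>
fun down :: "(nat \<Rightarrow> real) \<Rightarrow> real \<Rightarrow> nat \<Rightarrow> nat \<Rightarrow> real" where
  "down prev c T 0 = 0"
| "down prev c T (Suc 0) = 0"
| "down prev c T (Suc (Suc d)) =
     2 * prev (T - Suc d) + 2 * c * down prev c T (Suc d) - down prev c T d"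

text \<open>acoef n a t j k = a^(j)_k  (meaningful for 1 \<le> k \<le> n - j + 2).\<close>
fun acoef :: "nat \<Rightarrow> (nat \<Rightarrow> real) \<Rightarrow> (nat \<Rightarrow> real) \<Rightarrow> nat \<Rightarrow> nat \<Rightarrow> real" where
  "acoef n a t 0 = a"
| "acoef n a t (Suc j) =
     (\<lambda>k. down (acoef n a t j) (cos (t (Suc j))) (n + 1 - j) (n + 1 - j - k))"

definition Cfun :: "nat \<Rightarrow> (nat \<Rightarrow> real) \<Rightarrow> real \<Rightarrow> real" where
  "Cfun n a x = (\<Sum>j=1..n. a j * cos (real j * x))"

definition Sfun :: "nat \<Rightarrow> (nat \<Rightarrow> real) \<Rightarrow> real \<Rightarrow> real" where
  "Sfun n a x = (\<Sum>j=1..n. a j * sin (real j * x))"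

end

theory Submission
  imports Defs
begin

lemma cos_step: "cos (real (Suc N + 1) * x) = 2 * cos x * cos (real (Suc N) * x) - cos (real N * x)"
proof -
  have r: "real (Suc N + 1) * x = real (Suc N) * x + x" by (simp add: algebra_simps)
  have r2: "real N * x = real (Suc N) * x - x" by (simp add: algebra_simps)
  show ?thesis unfolding r r2 cos_add cos_diff by simp
qed

lemma sin_step: "sin (real (Suc N + 1) * x) = 2 * cos x * sin (real (Suc N) * x) - sin (real N * x)"
proof -
  have r: "real (Suc N + 1) * x = real (Suc N) * x + x" by (simp add: algebra_simps)
  have r2: "real N * x = real (Suc N) * x - x" by (simp add: algebra_simps)
  show ?thesis unfolding r r2 sin_add sin_diff by simp
qed

lemma sumC_gen:
  fixes q :: "nat \<Rightarrow> real"
  shows "(\<Sum>k=1..N. (q (k-1) - 2*c*q k + q (k+1)) * cos (real k * x)) =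
     2*(cos x - c) * (\<Sum>k=1..N. q k * cos (real k * x)) + q 0 * cos x - q 1
     + (q (N+1) * cos (real N * x) - q N * cos (real (N+1) * x))"
proof (induction N)
  case 0
  then show ?case by simp
next
  case (Suc N)
  define c0 where "c0 = cos (real N * x)"
  define c1 where "c1 = cos (real (Suc N) * x)"
  define S where "S = (\<Sum>k=1..N. q k * cos (real k * x))"
  define L where "L = (\<Sum>k=1..N. (q (k-1) - 2*c*q k + q (k+1)) * cos (real k * x))"
  have c1': "cos (real (N+1) * x) = c1" by (simp add: c1_def)
  have IH: "L = 2*(cos x - c) * S + q 0 * cos x - q 1 + (q (N+1) * c0 - q N * c1)"
    using Suc.IH unfolding L_def S_def c0_def c1' .
  have A: "(\<Sum>k=1..Suc N. (q (k-1) - 2*c*q k + q (k+1)) * cos (real k * x)) =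
      L + (q N - 2*c*q(Suc N) + q(Suc N+1)) * c1" by (simp add: L_def c1_def)
  have B: "(\<Sum>k=1..Suc N. q k * cos (real k * x)) = S + q (Suc N) * c1" by (simp add: S_def c1_def)
  have C: "cos (real (Suc N + 1) * x) = 2 * cos x * c1 - c0" unfolding c0_def c1_def by (rule cos_step)
  show ?case unfolding A B C c1_def[symmetric] IH by (simp add: algebra_simps)
qed

lemma sumS_gen:
  fixes q :: "nat \<Rightarrow> real"
  shows "(\<Sum>k=1..N. (q (k-1) - 2*c*q k + q (k+1)) * sin (real k * x)) =
     2*(cos x - c) * (\<Sum>k=1..N. q k * sin (real k * x)) + q 0 * sin x
     + (q (N+1) * sin (real N * x) - q N * sin (real (N+1) * x))"
proof (induction N)
  case 0
  then show ?case by simp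
next
  case (Suc N)
  define c0 where "c0 = sin (real N * x)"
  define c1 where "c1 = sin (real (Suc N) * x)"
  define S where "S = (\<Sum>k=1..N. q k * sin (real k * x))"
  define L where "L = (\<Sum>k=1..N. (q (k-1) - 2*c*q k + q (k+1)) * sin (real k * x))"
  have c1': "sin (real (N+1) * x) = c1" by (simp add: c1_def)
  have IH: "L = 2*(cos x - c) * S + q 0 * sin x + (q (N+1) * c0 - q N * c1)"
    using Suc.IH unfolding L_def S_def c0_def c1' .
  have A: "(\<Sum>k=1..Suc N. (q (k-1) - 2*c*q k + q (k+1)) * sin (real k * x)) =
      L + (q N - 2*c*q(Suc N) + q(Suc N+1)) * c1" by (simp add: L_def c1_def)
  have B: "(\<Sum>k=1..Suc N. q k * sin (real k * x)) = S + q (Suc N) * c1" by (simp add: S_def c1_def)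
  have C: "sin (real (Suc N + 1) * x) = 2 * cos x * c1 - c0" unfolding c0_def c1_def by (rule sin_step)
  show ?case unfolding A B C c1_def[symmetric] IH by (simp add: algebra_simps)
qed

lemma down_rec:
  assumes "1 \<le> k" "k + 1 \<le> T"
  shows "down p c T (T - (k-1)) = 2 * p k + 2*c*down p c T (T-k) - down p c T (T - (k+1))"
proof -
  define d where "d = T - (k+1)"
  have a1: "T - (k-1) = Suc (Suc d)" using assms unfolding d_def by simp
  have a2: "T - Suc d = k" using assms unfolding d_def by simp
  have a3: "T - k = Suc d" using assms unfolding d_def by simp
  show ?thesis unfolding a1 a3 d_def[symmetric] using a2 by simp
qed

lemma down_top:
  assumes "T \<le> k + 1" shows "down p c T (T - k) = 0"
proof -
  have "T - k = 0 \<or> T - k = Suc 0" using assms by arith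
  then show ?thesis by auto
qed

lemma azero:
  assumes "1 \<le> j" "n + 1 - j \<le> k"
  shows "acoef n a t j k = 0"
proof -
  obtain j' where j: "j = Suc j'" using assms by (cases j) auto
  have "acoef n a t j k = down (acoef n a t j') (cos (t (Suc j'))) (n+1-j') (n+1-j'-k)"
    unfolding j by simp
  also have "\<dots> = 0" using assms j by (intro down_top) auto
  finally show ?thesis .
qed

lemma arec:
  assumes "1 \<le> k" "k \<le> n" "j < n"
  shows "2 * acoef n a t j k = acoef n a t (Suc j) (k-1) - 2*cos(t(Suc j)) * acoef n a t (Suc j) k
     + acoef n a t (Suc j) (k+1)"
proof (cases "k + 1 \<le> n + 1 - j")
  case True
  show ?thesis using down_rec[OF assms(1) True, of "acoef n a t j" "cos (t (Suc j))"] by simp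
next
  case False
  then have j1: "1 \<le> j" using assms by simp
  have "acoef n a t j k = 0" using False j1 by (intro azero) auto
  moreover have "acoef n a t (Suc j) (k-1) = 0" using False assms by (intro azero) auto
  moreover have "acoef n a t (Suc j) k = 0" using False assms by (intro azero) auto
  moreover have "acoef n a t (Suc j) (k+1) = 0" using False assms by (intro azero) auto
  ultimately show ?thesis by simp
qed

definition Cs where "Cs n a t j x = (\<Sum>k=1..n. acoef n a t j k * cos (real k * x))"
definition Ss where "Ss n a t j x = (\<Sum>k=1..n. acoef n a t j k * sin (real k * x))"

lemma levC:
  assumes "j < n"
  shows "Cs n a t j x = (cos x - cos (t (Suc j))) * Cs n a t (Suc j) x
     + (acoef n a t (Suc j) 0 * cos x - acoef n a t (Suc j) 1) / 2"
proof -
  let ?q = "acoef n a t (Suc j)" and ?c = "cos (t (Suc j))"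
  have "2 * Cs n a t j x = (\<Sum>k=1..n. (?q (k-1) - 2*?c*?q k + ?q (k+1)) * cos (real k * x))"
    unfolding Cs_def sum_distrib_left
    by (rule sum.cong) (use arec[OF _ _ assms] in auto)
  also have "\<dots> = 2*(cos x - ?c) * Cs n a t (Suc j) x + ?q 0 * cos x - ?q 1"
    unfolding sumC_gen Cs_def using azero[of "Suc j" n n a t] azero[of "Suc j" n "n+1" a t] by simp
  finally show ?thesis by (simp add: field_simps)
qed

lemma levS:
  assumes "j < n"
  shows "Ss n a t j x = (cos x - cos (t (Suc j))) * Ss n a t (Suc j) x
     + acoef n a t (Suc j) 0 * sin x / 2"
proof -
  let ?q = "acoef n a t (Suc j)" and ?c = "cos (t (Suc j))"
  have "2 * Ss n a t j x = (\<Sum>k=1..n. (?q (k-1) - 2*?c*?q k + ?q (k+1)) * sin (real k * x))"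
    unfolding Ss_def sum_distrib_left
    by (rule sum.cong) (use arec[OF _ _ assms] in auto)
  also have "\<dots> = 2*(cos x - ?c) * Ss n a t (Suc j) x + ?q 0 * sin x"
    unfolding sumS_gen Ss_def using azero[of "Suc j" n n a t] azero[of "Suc j" n "n+1" a t] by simp
  finally show ?thesis by (simp add: field_simps)
qed


lemma zero_up:
  assumes "j < n" "1 \<le> j" "\<forall>k<j. acoef n a t j k = 0"
    "acoef n a t (Suc j) 0 = 0" "acoef n a t (Suc j) 1 = 0"
  shows "(\<forall>k\<le>j. acoef n a t (Suc j) k = 0) \<and> acoef n a t (Suc j) (Suc j) = 2 * acoef n a t j j"
proof -
  have Z: "\<forall>k. k \<le> j \<longrightarrow> acoef n a t (Suc j) k = 0 \<and> acoef n a t (Suc j) (Suc k) = 0 \<or> k = j"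
  proof (intro allI)
    fix k show "k \<le> j \<longrightarrow> acoef n a t (Suc j) k = 0 \<and> acoef n a t (Suc j) (Suc k) = 0 \<or> k = j"
    proof (induction k)
      case 0 then show ?case using assms by simp
    next
      case (Suc k)
      show ?case
      proof (intro impI)
        assume h: "Suc k \<le> j"
        then have h0: "acoef n a t (Suc j) k = 0 \<and> acoef n a t (Suc j) (Suc k) = 0" using Suc by auto
        show "acoef n a t (Suc j) (Suc k) = 0 \<and> acoef n a t (Suc j) (Suc (Suc k)) = 0 \<or> Suc k = j"
        proof (cases "Suc k = j")
          case True then show ?thesis by simp
        next
          case False
          have "2 * acoef n a t j (Suc k) = acoef n a t (Suc j) k - 2*cos(t(Suc j)) * acoef n a t (Suc j) (Suc k)
             + acoef n a t (Suc j) (Suc k+1)" using arec[of "Suc k" n j a t] h assms by simp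
          moreover have "acoef n a t j (Suc k) = 0" using assms False h by auto
          ultimately show ?thesis using h0 by simp
        qed
      qed
    qed
  qed
  have z: "\<forall>k\<le>j. acoef n a t (Suc j) k = 0"
  proof (intro allI impI)
    fix k assume "k \<le> j"
    show "acoef n a t (Suc j) k = 0"
    proof (cases k)
      case 0 then show ?thesis using assms by simp
    next
      case (Suc k')
      then show ?thesis using Z[rule_format, of k'] \<open>k \<le> j\<close> by auto
    qed
  qed
  have "2 * acoef n a t j j = acoef n a t (Suc j) (j-1) - 2*cos(t(Suc j)) * acoef n a t (Suc j) j
             + acoef n a t (Suc j) (j+1)" using arec[of j n j a t] assms by simp
  with z have "2 * acoef n a t j j = acoef n a t (Suc j) (Suc j)" by simp
  with z show ?thesis by simp
qed

lemma Cs0: "Cs n a t 0 x = Cfun n a x" by (simp add: Cs_def Cfun_def)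
lemma Ss0: "Ss n a t 0 x = Sfun n a x" by (simp add: Ss_def Sfun_def)

theorem corollary3:
  fixes n m :: nat and a t :: "nat \<Rightarrow> real"
  assumes "n \<ge> 2" and "1 \<le> m" and "m < n"
    and "\<forall>i\<in>{1..m}. 0 < t i \<and> t i < pi"
    and "inj_on t {1..m}"
    and "\<forall>i\<in>{1..m}. Sfun n a (t i) = 0"
    and "\<forall>i\<in>{1..m}. Cfun n a (t i) = Cfun n a (t 1)"
  shows "\<forall>i\<in>{1..m}. Cfun n a (t i) = - acoef n a t m m / 2 ^ m"
proof -
  define K where "K = Cfun n a (t 1)"
  have KK: "\<forall>i\<in>{1..m}. Cfun n a (t i) = K" using assms(7) unfolding K_def by blast
  have cosne: "cos (t i) \<noteq> cos (t i')" if "i \<in> {1..m}" "i' \<in> {1..m}" "i \<noteq> i'" for i i'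
  proof
    assume "cos (t i) = cos (t i')"
    moreover have "0 < t i" "t i < pi" using assms(4) that(1) by blast+
    moreover have "0 < t i'" "t i' < pi" using assms(4) that(2) by blast+
    ultimately have "t i = t i'" using cos_inj_pi[of "t i" "t i'"] by linarith
    then show False using assms(5) that by (auto dest: inj_onD)
  qed
  have sinne: "sin (t i) \<noteq> 0" if "i \<in> {1..m}" for i
    using sin_gt_zero assms(4) that by (metis less_irrefl)
  let ?P = "\<lambda>j. (\<forall>i\<in>{j+1..m}. Cs n a t j (t i) = 0 \<and> Ss n a t j (t i) = 0)
      \<and> (\<forall>k<j. acoef n a t j k = 0) \<and> acoef n a t j j = -(2^j) * K"
  have main: "1 \<le> j \<longrightarrow> j \<le> m \<longrightarrow> ?P j" for j
  proof (induction j)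
    case 0 then show ?case by simp
  next
    case (Suc j)
    show ?case
    proof (intro impI)
      assume j1: "1 \<le> Suc j" and jm: "Suc j \<le> m"
      have jn: "j < n" using jm assms by simp
      have tj: "Suc j \<in> {1..m}" using jm by simp
      let ?x = "t (Suc j)"
      have C: "\<And>x. Cs n a t j x = (cos x - cos ?x) * Cs n a t (Suc j) x
         + (acoef n a t (Suc j) 0 * cos x - acoef n a t (Suc j) 1) / 2" using levC[OF jn] .
      have S: "\<And>x. Ss n a t j x = (cos x - cos ?x) * Ss n a t (Suc j) x
         + acoef n a t (Suc j) 0 * sin x / 2" using levS[OF jn] .
      show "?P (Suc j)"
      proof (cases j)
        case 0
        have S0: "Ss n a t 0 ?x = 0" using assms(6) tj 0 by (simp add: Ss0)
        have a0: "acoef n a t (Suc j) 0 = 0" using S[of ?x] S0 sinne[OF tj] 0 by simp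
        have C0: "Cs n a t 0 ?x = K" using KK tj 0 by (simp add: Cs0)
        have a1: "acoef n a t (Suc j) 1 = -2 * K" using C[of ?x] C0 a0 0 by simp
        have "Cs n a t (Suc j) (t i) = 0 \<and> Ss n a t (Suc j) (t i) = 0" if i: "i \<in> {Suc j+1..m}" for i
        proof -
          have im: "i \<in> {1..m}" using i by simp
          have ne: "cos (t i) - cos ?x \<noteq> 0" using cosne[OF im tj] i by simp
          have "Cs n a t 0 (t i) = K" using KK im by (simp add: Cs0)
          then have "(cos (t i) - cos ?x) * Cs n a t (Suc j) (t i) = 0" using C[of "t i"] a0 a1 0 by simp
          moreover have "(cos (t i) - cos ?x) * Ss n a t (Suc j) (t i) = 0"
            using S[of "t i"] a0 assms(6) im 0 by (simp add: Ss0)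
          ultimately show ?thesis using ne by simp
        qed
        then show ?thesis using a0 a1 0 by simp
      next
        case (Suc j')
        then have j1': "1 \<le> j" by simp
        have IH: "?P j" using Suc.IH j1' jm by simp
        have tj': "Suc j \<in> {j+1..m}" using jm by simp
        have a0: "acoef n a t (Suc j) 0 = 0" using S[of ?x] IH tj' sinne[OF tj] by simp
        have a1: "acoef n a t (Suc j) 1 = 0" using C[of ?x] IH tj' a0 by simp
        have zu: "(\<forall>k\<le>j. acoef n a t (Suc j) k = 0) \<and> acoef n a t (Suc j) (Suc j) = 2 * acoef n a t j j"
          using zero_up[OF jn j1' _ a0 a1] IH by blast
        have "Cs n a t (Suc j) (t i) = 0 \<and> Ss n a t (Suc j) (t i) = 0" if i: "i \<in> {Suc j+1..m}" for i
        proof -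
          have im: "i \<in> {1..m}" using i by simp
          have ne: "cos (t i) - cos ?x \<noteq> 0" using cosne[OF im tj] i by simp
          have ij: "i \<in> {j+1..m}" using i by simp
          have "(cos (t i) - cos ?x) * Cs n a t (Suc j) (t i) = 0" using C[of "t i"] a0 a1 IH ij by simp
          moreover have "(cos (t i) - cos ?x) * Ss n a t (Suc j) (t i) = 0"
            using S[of "t i"] a0 IH ij by simp
          ultimately show ?thesis using ne by simp
        qed
        moreover have "\<forall>k<Suc j. acoef n a t (Suc j) k = 0" using zu IH by auto
        moreover have "acoef n a t (Suc j) (Suc j) = -(2^Suc j) * K" using zu IH by simp
        ultimately show ?thesis by simp
      qed
    qed
  qed
  have "acoef n a t m m = -(2^m) * K" using main[of m] assms(2) by simp
  then have "K = - acoef n a t m m / 2 ^ m" by simp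
  then show ?thesis using KK by simp
qed

end
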